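(* Let $\Gamma$ be a finite connected $(G,2)$-geodesic-transitive graph of girth at least $4$, with $G\le\mathrm{Aut}(\Gamma)$. Let $N$ be an intransitive normal subgroup of $G$ with at least $3$ orbits on $V(\Gamma)$. Then $\Gamma_N$ is a complete graph if and only if $\Gamma_N$ has girth $3$.
   Context: A $2$-geodesic is a path $(v_0,v_1,v_2)$ with $d(v_0,v_2)=2$; $\Gamma$ is $(G,2)$-geodesic-transitive if it has a $2$-geodesic and $G$ is transitive on vertices, on arcs and on $2$-geodesics. $\Gamma_N$ is the graph whose vertices are the $N$-orbits on $V(\Gamma)$, two distinct orbits being adjacent iff some edge of $\Gamma$ joins them. *)

theory Defs
  imports "HOL-Algebra.Algebra" "HOL-Library.Extended_Nat"
begin

definition simple_graph :: "'v set \<Rightarrow> ('v \<Rightarrow> 'v \<Rightarrow> bool) \<Rightarrow> bool" where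
  "simple_graph V E \<longleftrightarrow> (\<forall>x y. E x y \<longrightarrow> x \<in> V \<and> y \<in> V \<and> x \<noteq> y \<and> E y x)"

definition is_walk :: "('v \<Rightarrow> 'v \<Rightarrow> bool) \<Rightarrow> 'v list \<Rightarrow> bool" where
  "is_walk E xs \<longleftrightarrow> xs \<noteq> [] \<and> (\<forall>i. Suc i < length xs \<longrightarrow> E (xs ! i) (xs ! Suc i))"

definition connected_graph :: "'v set \<Rightarrow> ('v \<Rightarrow> 'v \<Rightarrow> bool) \<Rightarrow> bool" where
  "connected_graph V E \<longleftrightarrow>
     (\<forall>u\<in>V. \<forall>w\<in>V. \<exists>xs. is_walk E xs \<and> hd xs = u \<and> last xs = w)"

definition gdist :: "('v \<Rightarrow> 'v \<Rightarrow> bool) \<Rightarrow> 'v \<Rightarrow> 'v \<Rightarrow> nat" where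
  "gdist E u w = (LEAST n. \<exists>xs. is_walk E xs \<and> hd xs = u \<and> last xs = w \<and> length xs = Suc n)"

definition two_geodesic :: "('v \<Rightarrow> 'v \<Rightarrow> bool) \<Rightarrow> 'v \<Rightarrow> 'v \<Rightarrow> 'v \<Rightarrow> bool" where
  "two_geodesic E u v w \<longleftrightarrow> E u v \<and> E v w \<and> gdist E u w = 2"

definition is_cycle :: "('v \<Rightarrow> 'v \<Rightarrow> bool) \<Rightarrow> 'v list \<Rightarrow> bool" where
  "is_cycle E xs \<longleftrightarrow> length xs \<ge> 3 \<and> distinct xs \<and> is_walk E xs \<and> E (last xs) (hd xs)"

definition girth :: "('v \<Rightarrow> 'v \<Rightarrow> bool) \<Rightarrow> enat" where
  "girth E = Inf {enat (length xs) | xs. is_cycle E xs}"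

definition aut_group :: "'v set \<Rightarrow> ('v \<Rightarrow> 'v \<Rightarrow> bool) \<Rightarrow> ('v \<Rightarrow> 'v) set \<Rightarrow> bool" where
  "aut_group V E G \<longleftrightarrow> subgroup G (BijGroup V) \<and>
     (\<forall>g\<in>G. \<forall>x\<in>V. \<forall>y\<in>V. E x y \<longleftrightarrow> E (g x) (g y))"

definition two_geodesic_transitive ::
  "'v set \<Rightarrow> ('v \<Rightarrow> 'v \<Rightarrow> bool) \<Rightarrow> ('v \<Rightarrow> 'v) set \<Rightarrow> bool" where
  "two_geodesic_transitive V E G \<longleftrightarrow>
     (\<exists>u v w. two_geodesic E u v w) \<and>
     (\<forall>u\<in>V. \<forall>u'\<in>V. \<exists>g\<in>G. g u = u') \<and>
     (\<forall>u v u' v'. E u v \<longrightarrow> E u' v' \<longrightarrow> (\<exists>g\<in>G. g u = u' \<and> g v = v')) \<and>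
     (\<forall>u v w u' v' w'. two_geodesic E u v w \<longrightarrow> two_geodesic E u' v' w' \<longrightarrow>
        (\<exists>g\<in>G. g u = u' \<and> g v = v' \<and> g w = w'))"

definition orbit :: "('v \<Rightarrow> 'v) set \<Rightarrow> 'v \<Rightarrow> 'v set" where
  "orbit N x = (\<lambda>g. g x) ` N"

definition quot_vertices :: "'v set \<Rightarrow> ('v \<Rightarrow> 'v) set \<Rightarrow> 'v set set" where
  "quot_vertices V N = orbit N ` V"

definition quot_adj :: "'v set \<Rightarrow> ('v \<Rightarrow> 'v \<Rightarrow> bool) \<Rightarrow> ('v \<Rightarrow> 'v) set \<Rightarrow> 'v set \<Rightarrow> 'v set \<Rightarrow> bool" where
  "quot_adj V E N B C \<longleftrightarrow> B \<in> quot_vertices V N \<and> C \<in> quot_vertices V N \<and> B \<noteq> C \<and>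
     (\<exists>x\<in>B. \<exists>y\<in>C. E x y)"

definition complete_graph :: "'w set \<Rightarrow> ('w \<Rightarrow> 'w \<Rightarrow> bool) \<Rightarrow> bool" where
  "complete_graph W F \<longleftrightarrow> (\<forall>x\<in>W. \<forall>y\<in>W. x \<noteq> y \<longrightarrow> F x y)"

end

theory Submission
  imports Defs
begin

lemma G_bij: assumes "subgroup G (BijGroup V)" "g \<in> G" shows "bij_betw g V V" "g \<in> extensional V"
  using subgroup.subset[OF assms(1)] assms(2) by (auto simp: BijGroup_def Bij_def)

lemma N_sub: assumes "N \<lhd> (BijGroup V)\<lparr>carrier := G\<rparr>" shows "N \<subseteq> G"
  using subgroup.subset[OF normal_imp_subgroup[OF assms]] by simp

lemma N_mult: assumes "subgroup G (BijGroup V)" "N \<lhd> (BijGroup V)\<lparr>carrier := G\<rparr>"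
  "n1 \<in> N" "n2 \<in> N" shows "\<exists>n\<in>N. \<forall>x\<in>V. n x = n1 (n2 x)"
proof -
  have s: "subgroup N ((BijGroup V)\<lparr>carrier := G\<rparr>)" using normal_imp_subgroup[OF assms(2)] .
  have "n1 \<otimes>\<^bsub>(BijGroup V)\<lparr>carrier := G\<rparr>\<^esub> n2 \<in> N" using subgroup.m_closed[OF s assms(3,4)] .
  moreover have "n1 \<in> Bij V" "n2 \<in> Bij V" using N_sub[OF assms(2)] assms(3,4) subgroup.subset[OF assms(1)]
    by (auto simp: BijGroup_def)
  ultimately show ?thesis by (intro bexI[of _ "n1 \<otimes>\<^bsub>(BijGroup V)\<lparr>carrier := G\<rparr>\<^esub> n2"]) (auto simp: BijGroup_def compose_def)
qed

lemma N_one: assumes "subgroup G (BijGroup V)" "N \<lhd> (BijGroup V)\<lparr>carrier := G\<rparr>"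
  shows "\<exists>n\<in>N. \<forall>x\<in>V. n x = x"
proof -
  have s: "subgroup N ((BijGroup V)\<lparr>carrier := G\<rparr>)" using normal_imp_subgroup[OF assms(2)] .
  show ?thesis using subgroup.one_closed[OF s] by (intro bexI[of _ "\<one>\<^bsub>(BijGroup V)\<lparr>carrier := G\<rparr>\<^esub>"]) (auto simp: BijGroup_def)
qed

lemma N_conj: assumes "subgroup G (BijGroup V)" "N \<lhd> (BijGroup V)\<lparr>carrier := G\<rparr>"
  "g \<in> G" "n \<in> N" "u \<in> V" shows "\<exists>n'\<in>N. g (n u) = n' (g u)"
proof -
  let ?H = "(BijGroup V)\<lparr>carrier := G\<rparr>"
  have gB: "g \<in> Bij V" and nB: "n \<in> Bij V" using N_sub[OF assms(2)] assms(3,4) subgroup.subset[OF assms(1)]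
    by (auto simp: BijGroup_def)
  have inv: "inv\<^bsub>?H\<^esub> g = inv\<^bsub>BijGroup V\<^esub> g"
    using group.m_inv_consistent[OF group_BijGroup assms(1) assms(3)] .
  have ig: "inv\<^bsub>BijGroup V\<^esub> g = (\<lambda>x \<in> V. (inv_into V g) x)" using inv_BijGroup[OF gB] .
  have igB: "(\<lambda>x \<in> V. (inv_into V g) x) \<in> Bij V" using restrict_inv_into_Bij[OF gB] .
  have "g \<otimes>\<^bsub>?H\<^esub> n \<otimes>\<^bsub>?H\<^esub> inv\<^bsub>?H\<^esub> g \<in> N"
    using normal.inv_op_closed2[OF assms(2)] assms(3,4) by simp
  moreover have gu: "g u \<in> V" using gB assms(5) by (auto simp: Bij_def bij_betw_def)
  moreover have "inv_into V g (g u) = u" using gB assms(5) by (auto simp: Bij_def bij_betw_def)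
  moreover have "compose V g n \<in> Bij V" using compose_Bij[OF gB nB] .
  ultimately show ?thesis
    apply (intro bexI[of _ "g \<otimes>\<^bsub>?H\<^esub> n \<otimes>\<^bsub>?H\<^esub> inv\<^bsub>?H\<^esub> g"])
    apply (simp_all only: inv ig)
    apply (auto simp: BijGroup_def compose_def gB nB igB assms(5))
    done
qed

lemma N_inv: assumes "subgroup G (BijGroup V)" "N \<lhd> (BijGroup V)\<lparr>carrier := G\<rparr>"
  "n \<in> N" shows "\<exists>n'\<in>N. \<forall>x\<in>V. n' (n x) = x"
proof -
  let ?H = "(BijGroup V)\<lparr>carrier := G\<rparr>"
  let ?i = "inv\<^bsub>?H\<^esub> n"
  have s: "subgroup N ?H" using normal_imp_subgroup[OF assms(2)] .
  have grp: "group ?H" using subgroup.subgroup_is_group[OF assms(1) group_BijGroup] .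
  have nG: "n \<in> G" using N_sub[OF assms(2)] assms(3) by auto
  have iN: "?i \<in> N" using subgroup.m_inv_closed[OF s assms(3)] .
  have li: "?i \<otimes>\<^bsub>?H\<^esub> n = \<one>\<^bsub>?H\<^esub>" using group.l_inv[OF grp] nG by simp
  have iB: "?i \<in> Bij V" and nB: "n \<in> Bij V" using iN N_sub[OF assms(2)] nG subgroup.subset[OF assms(1)]
    by (auto simp: BijGroup_def)
  define i where "i = ?i"
  have li2: "i \<otimes>\<^bsub>BijGroup V\<^esub> n = \<one>\<^bsub>BijGroup V\<^esub>" using li unfolding i_def by simp
  have iB': "i \<in> Bij V" using iB i_def by simp
  have m: "i \<otimes>\<^bsub>BijGroup V\<^esub> n = compose V i n" using iB' nB by (simp add: BijGroup_def)
  have o: "\<one>\<^bsub>BijGroup V\<^esub> = (\<lambda>x\<in>V. x)" by (simp add: BijGroup_def)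
  have c: "compose V i n = (\<lambda>x\<in>V. x)" using li2 m o by simp
  have "\<forall>x\<in>V. i (n x) = x"
  proof
    fix x assume "x \<in> V"
    then have "compose V i n x = x" using c by simp
    then show "i (n x) = x" using \<open>x \<in> V\<close> by (simp add: compose_def)
  qed
  then show ?thesis using iN unfolding i_def by blast
qed

lemma walk_Cons2: "is_walk E (a#b#ys) \<longleftrightarrow> E a b \<and> is_walk E (b#ys)"
proof
  assume h: "is_walk E (a#b#ys)"
  have h': "\<And>i. Suc i < length (a#b#ys) \<Longrightarrow> E ((a#b#ys)!i) ((a#b#ys)!Suc i)"
    using h unfolding is_walk_def by blast
  have "E a b" using h'[of 0] by simp
  moreover have "is_walk E (b#ys)" unfolding is_walk_def
  proof (intro conjI allI impI)
    fix i assume "Suc i < length (b#ys)"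
    then show "E ((b#ys)!i) ((b#ys)!Suc i)" using h'[of "Suc i"] by simp
  qed simp
  ultimately show "E a b \<and> is_walk E (b#ys)" by blast
next
  assume h: "E a b \<and> is_walk E (b#ys)"
  have h': "\<And>i. Suc i < length (b#ys) \<Longrightarrow> E ((b#ys)!i) ((b#ys)!Suc i)"
    using h unfolding is_walk_def by blast
  show "is_walk E (a#b#ys)" unfolding is_walk_def
  proof (intro conjI allI impI)
    fix i assume i: "Suc i < length (a#b#ys)"
    show "E ((a#b#ys)!i) ((a#b#ys)!Suc i)"
    proof (cases i)
      case 0 then show ?thesis using h by simp
    next
      case (Suc j) then show ?thesis using h'[of j] i by simp
    qed
  qed simp
qed

lemma walk_Cons: "xs \<noteq> [] \<Longrightarrow> is_walk E (a#xs) \<longleftrightarrow> E a (hd xs) \<and> is_walk E xs"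
  by (cases xs) (auto simp: walk_Cons2)

lemma walk_single: "is_walk E [a]" by (simp add: is_walk_def)

theorem lemma3p3:
  fixes V :: "'v set" and E :: "'v \<Rightarrow> 'v \<Rightarrow> bool" and G N :: "('v \<Rightarrow> 'v) set"
  assumes "finite V"
    and "simple_graph V E"
    and "connected_graph V E"
    and "aut_group V E G"
    and "two_geodesic_transitive V E G"
    and "girth E \<ge> 4"
    and "N \<lhd> (BijGroup V)\<lparr>carrier := G\<rparr>"
    and "\<not> (\<forall>u\<in>V. \<forall>w\<in>V. \<exists>n\<in>N. n u = w)"
    and "card (quot_vertices V N) \<ge> 3"
  shows "complete_graph (quot_vertices V N) (quot_adj V E N) \<longleftrightarrow> girth (quot_adj V E N) = 3"
proof -
  let ?O = "orbit N"
  let ?QV = "quot_vertices V N"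
  let ?QA = "quot_adj V E N"
  have arcT: "\<And>u v u' v'. E u v \<Longrightarrow> E u' v' \<Longrightarrow> \<exists>g\<in>G. g u = u' \<and> g v = v'"
    using assms(5) unfolding two_geodesic_transitive_def by blast
  have geoT: "\<And>u v w u' v' w'. two_geodesic E u v w \<Longrightarrow> two_geodesic E u' v' w' \<Longrightarrow>
        \<exists>g\<in>G. g u = u' \<and> g v = v' \<and> g w = w'"
    using assms(5) unfolding two_geodesic_transitive_def by blast
  have sg: "subgroup G (BijGroup V)" using assms(4) by (simp add: aut_group_def)
  have autE: "\<And>g x y. g \<in> G \<Longrightarrow> x \<in> V \<Longrightarrow> y \<in> V \<Longrightarrow> E x y \<longleftrightarrow> E (g x) (g y)"
    using assms(4) by (simp add: aut_group_def)
  have EV: "\<And>x y. E x y \<Longrightarrow> x \<in> V \<and> y \<in> V \<and> x \<noteq> y \<and> E y x"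
    using assms(2) by (simp add: simple_graph_def)
  have gV: "\<And>g x. g \<in> G \<Longrightarrow> x \<in> V \<Longrightarrow> g x \<in> V"
    using G_bij[OF sg] by (meson bij_betwE)
  have NG: "N \<subseteq> G" using N_sub[OF assms(7)] .
  have nV: "\<And>n x. n \<in> N \<Longrightarrow> x \<in> V \<Longrightarrow> n x \<in> V" using gV NG by blast
  have self: "\<And>x. x \<in> V \<Longrightarrow> x \<in> ?O x"
    using N_one[OF sg assms(7)] unfolding orbit_def by (metis image_eqI)
  have trans1: "\<And>x y z. x \<in> V \<Longrightarrow> y \<in> ?O x \<Longrightarrow> z \<in> ?O y \<Longrightarrow> z \<in> ?O x"
  proof -
    fix x y z assume x: "x \<in> V" and y: "y \<in> ?O x" and z: "z \<in> ?O y"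
    obtain n where n: "n \<in> N" "y = n x" using y unfolding orbit_def by blast
    obtain m where m: "m \<in> N" "z = m y" using z unfolding orbit_def by blast
    obtain k where "k \<in> N" "\<forall>x\<in>V. k x = m (n x)" using N_mult[OF sg assms(7) m(1) n(1)] by blast
    then show "z \<in> ?O x" using x n m unfolding orbit_def by (metis image_eqI)
  qed
  have sym1: "\<And>x y. x \<in> V \<Longrightarrow> y \<in> ?O x \<Longrightarrow> x \<in> ?O y"
  proof -
    fix x y assume x: "x \<in> V" and y: "y \<in> ?O x"
    obtain n where n: "n \<in> N" "y = n x" using y unfolding orbit_def by blast
    obtain k where "k \<in> N" "\<forall>x\<in>V. k (n x) = x" using N_inv[OF sg assms(7) n(1)] by blast
    then show "x \<in> ?O y" using x n unfolding orbit_def by (metis image_eqI)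
  qed
  have OV: "\<And>x y. x \<in> V \<Longrightarrow> y \<in> ?O x \<Longrightarrow> y \<in> V"
    using nV unfolding orbit_def by blast
  have oeq: "\<And>x y. x \<in> V \<Longrightarrow> y \<in> ?O x \<Longrightarrow> ?O y = ?O x"
  proof -
    fix x y assume x: "x \<in> V" and y: "y \<in> ?O x"
    have yV: "y \<in> V" using OV x y .
    show "?O y = ?O x"
    proof
      show "?O y \<subseteq> ?O x" using trans1[OF x y] by blast
      show "?O x \<subseteq> ?O y" using trans1[OF yV sym1[OF x y]] by blast
    qed
  qed
  have conj: "\<And>g x y. g \<in> G \<Longrightarrow> x \<in> V \<Longrightarrow> y \<in> ?O x \<Longrightarrow> g y \<in> ?O (g x)"
  proof -
    fix g x y assume g: "g \<in> G" and x: "x \<in> V" and y: "y \<in> ?O x"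
    obtain n where n: "n \<in> N" "y = n x" using y unfolding orbit_def by blast
    obtain n' where "n' \<in> N" "g (n x) = n' (g x)" using N_conj[OF sg assms(7) g n(1) x] by blast
    then show "g y \<in> ?O (g x)" using n unfolding orbit_def by auto
  qed
  have qvE: "\<And>B y. B \<in> ?QV \<Longrightarrow> y \<in> B \<Longrightarrow> B = ?O y"
  proof -
    fix B y assume B: "B \<in> ?QV" and y: "y \<in> B"
    obtain x where x: "x \<in> V" "B = ?O x" using B unfolding quot_vertices_def by blast
    show "B = ?O y" using oeq[OF x(1)] x y by simp
  qed
  have qvI: "\<And>x. x \<in> V \<Longrightarrow> ?O x \<in> ?QV" unfolding quot_vertices_def by blast
  have qa_sym: "\<And>B C. ?QA B C \<Longrightarrow> ?QA C B"
    unfolding quot_adj_def using EV by blast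
  have noin: "\<And>x y. E x y \<Longrightarrow> ?O x \<noteq> ?O y"
  proof (rule ccontr)
    fix x0 y0 assume e0: "E x0 y0" and "\<not> ?O x0 \<noteq> ?O y0"
    then have "?O x0 = ?O y0" by simp
    moreover have "y0 \<in> ?O y0" using self EV[OF e0] by blast
    ultimately have y0: "y0 \<in> ?O x0" by simp
    have all: "\<And>x y. E x y \<Longrightarrow> y \<in> ?O x"
    proof -
      fix x y assume e: "E x y"
      obtain g where g: "g \<in> G" "g x0 = x" "g y0 = y"
        using arcT[OF e0 e] by blast
      have x0V: "x0 \<in> V" using EV[OF e0] by blast
      have "g y0 \<in> ?O (g x0)" using conj[OF g(1) x0V y0] .
      then show "y \<in> ?O x" by (simp only: g(2,3))
    qed
    have walk: "\<And>xs. is_walk E xs \<Longrightarrow> hd xs \<in> V \<Longrightarrow> last xs \<in> ?O (hd xs)"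
    proof -
      fix xs show "is_walk E xs \<Longrightarrow> hd xs \<in> V \<Longrightarrow> last xs \<in> ?O (hd xs)"
      proof (induction xs)
        case Nil then show ?case by (simp add: is_walk_def)
      next
        case (Cons a xs)
        show ?case
        proof (cases "xs = []")
          case True then show ?thesis using Cons.prems(2) self by simp
        next
          case False
          have w: "is_walk E xs" using walk_Cons[OF False, of E a] Cons.prems(1) by blast
          have e: "E a (hd xs)" using walk_Cons[OF False, of E a] Cons.prems(1) by blast
          have "last xs \<in> ?O (hd xs)" using Cons.IH[OF w] EV[OF e] by blast
          moreover have aV: "a \<in> V" using EV[OF e] by blast
          ultimately have "last xs \<in> ?O a" using trans1[OF aV all[OF e]] by simp
          then show ?thesis using False by simp
        qed
      qed
    qed
    have "\<forall>u\<in>V. \<forall>w\<in>V. \<exists>n\<in>N. n u = w"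
    proof (intro ballI)
      fix u w assume u: "u \<in> V" and w: "w \<in> V"
      obtain xs where "is_walk E xs" "hd xs = u" "last xs = w" using assms(3) u w
        unfolding connected_graph_def by blast
      then have "w \<in> ?O u" using walk[of xs] u by simp
      then show "\<exists>n\<in>N. n u = w" unfolding orbit_def by auto
    qed
    then show False by (rule notE[OF assms(8)])
  qed
  have notri: "\<And>x y z. E x y \<Longrightarrow> E y z \<Longrightarrow> E x z \<Longrightarrow> False"
  proof -
    fix x y z assume xy: "E x y" and yz: "E y z" and xz: "E x z"
    have c: "is_cycle E [x,y,z]" unfolding is_cycle_def
      using EV[OF xy] EV[OF yz] EV[OF xz] xy yz by (simp add: walk_Cons2 walk_single)
    have "girth E \<le> enat (length [x,y,z])" unfolding girth_def
      by (rule Inf_lower) (use c in blast)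
    then have "girth E \<le> 3" by (simp add: numeral_eq_enat numeral_3_eq_3)
    then have "enat 4 \<le> enat 3" using assms(6) by (metis numeral_eq_enat order_trans)
    then show False by simp
  qed
  have geo: "\<And>x y z. E x y \<Longrightarrow> E y z \<Longrightarrow> x \<noteq> z \<Longrightarrow> two_geodesic E x y z"
  proof -
    fix x y z assume xy: "E x y" and yz: "E y z" and xz: "x \<noteq> z"
    have "gdist E x z = 2" unfolding gdist_def
    proof (rule Least_equality)
      show "\<exists>xs. is_walk E xs \<and> hd xs = x \<and> last xs = z \<and> length xs = Suc 2"
        by (rule exI[of _ "[x,y,z]"]) (simp add: walk_Cons2 walk_single xy yz)
    next
      fix m assume "\<exists>xs. is_walk E xs \<and> hd xs = x \<and> last xs = z \<and> length xs = Suc m"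
      then obtain xs where h: "is_walk E xs" "hd xs = x" "last xs = z" "length xs = Suc m" by blast
      show "2 \<le> m"
      proof (rule ccontr)
        assume "\<not> 2 \<le> m"
        then have "m = 0 \<or> m = 1" by linarith
        then show False
        proof
          assume "m = 0"
          then obtain a where "xs = [a]" using h(4) by (auto simp: length_Suc_conv)
          then show False using h xz by simp
        next
          assume "m = 1"
          then obtain a b where ab: "xs = [a,b]" using h(4) by (auto simp: length_Suc_conv)
          then have "E x z" using h by (simp add: walk_Cons2)
          then show False using notri[OF xy yz] by blast
        qed
      qed
    qed
    then show "two_geodesic E x y z" unfolding two_geodesic_def using xy yz by blast
  qed
  have lift: "\<And>U Y W. ?QA U Y \<Longrightarrow> ?QA Y W \<Longrightarrow> U \<noteq> W \<Longrightarrow>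
      \<exists>x y z. U = ?O x \<and> W = ?O z \<and> E x y \<and> E y z \<and> x \<noteq> z"
  proof -
    fix U Y W assume XY: "?QA U Y" and YZ: "?QA Y W" and XZ: "U \<noteq> W"
    obtain x' y' where x'y': "x' \<in> U" "y' \<in> Y" "E x' y'" and XQ: "U \<in> ?QV" and YQ: "Y \<in> ?QV"
      using XY unfolding quot_adj_def by blast
    obtain y'' z where y''z: "y'' \<in> Y" "z \<in> W" "E y'' z" and ZQ: "W \<in> ?QV"
      using YZ unfolding quot_adj_def by blast
    have Y: "Y = ?O y'" using qvE[OF YQ x'y'(2)] .
    then obtain n where n: "n \<in> N" "y'' = n y'" using y''z(1) unfolding orbit_def by blast
    have x'V: "x' \<in> V" and y'V: "y' \<in> V" using EV[OF x'y'(3)] by auto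
    have e: "E (n x') y''" using autE[of n x' y'] n NG x'V y'V x'y'(3) by auto
    have "n x' \<in> ?O x'" using n(1) unfolding orbit_def by blast
    then have U: "U = ?O (n x')" using oeq[OF x'V] qvE[OF XQ x'y'(1)] by simp
    have W: "W = ?O z" using qvE[OF ZQ y''z(2)] .
    have "n x' \<noteq> z" using U W XZ by auto
    then show "\<exists>x y z. U = ?O x \<and> W = ?O z \<and> E x y \<and> E y z \<and> x \<noteq> z"
      using U W e y''z(3) by blast
  qed
  have mapq: "\<And>g b d. g \<in> G \<Longrightarrow> b \<in> V \<Longrightarrow> d \<in> V \<Longrightarrow> ?QA (?O b) (?O d) \<Longrightarrow> ?QA (?O (g b)) (?O (g d))"
  proof -
    fix g b d assume g: "g \<in> G" and b: "b \<in> V" and d: "d \<in> V" and q: "?QA (?O b) (?O d)"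
    obtain b' d' where bd: "b' \<in> ?O b" "d' \<in> ?O d" "E b' d'" using q unfolding quot_adj_def by blast
    have b'V: "b' \<in> V" and d'V: "d' \<in> V" using EV[OF bd(3)] by auto
    have e: "E (g b') (g d')" using autE[OF g b'V d'V] bd(3) by simp
    have gb: "g b' \<in> ?O (g b)" using conj[OF g b bd(1)] .
    have gd: "g d' \<in> ?O (g d)" using conj[OF g d bd(2)] .
    have "?O (g b') = ?O (g b)" using oeq[OF gV[OF g b] gb] .
    moreover have "?O (g d') = ?O (g d)" using oeq[OF gV[OF g d] gd] .
    ultimately have ne: "?O (g b) \<noteq> ?O (g d)" using noin[OF e] by simp
    show "?QA (?O (g b)) (?O (g d))" unfolding quot_adj_def
      using qvI[OF gV[OF g b]] qvI[OF gV[OF g d]] ne gb gd e by blast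
  qed
  have main: "complete_graph ?QV ?QA"
    if tri: "?QA A B" "?QA B C" "?QA C A" "A \<noteq> C" for A B C
  proof -
    obtain b c d where bcd: "A = ?O b" "C = ?O d" "E b c" "E c d" "b \<noteq> d"
      using lift[OF tri(1,2,4)] by blast
    have gb: "two_geodesic E b c d" using geo bcd by blast
    have all2: "?QA U W" if XY: "?QA U Y" and YZ: "?QA Y W" and XZ: "U \<noteq> W" for U Y W
    proof -
      obtain x y z where xyz: "U = ?O x" "W = ?O z" "E x y" "E y z" "x \<noteq> z"
        using lift[OF XY YZ XZ] by blast
      have gx: "two_geodesic E x y z" using geo xyz by blast
      obtain g where g: "g \<in> G" "g b = x" "g c = y" "g d = z" using geoT[OF gb gx] by blast
      have "?QA (?O b) (?O d)" using qa_sym[OF tri(3)] bcd by simp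
      then have "?QA (?O (g b)) (?O (g d))" using mapq[OF g(1)] EV[OF bcd(3)] EV[OF bcd(4)] by blast
      then show ?thesis using g xyz by simp
    qed
    have walkR: "\<And>xs. is_walk E xs \<Longrightarrow> hd xs \<in> V \<Longrightarrow>
        ?O (hd xs) = ?O (last xs) \<or> ?QA (?O (hd xs)) (?O (last xs))"
    proof -
      fix xs show "is_walk E xs \<Longrightarrow> hd xs \<in> V \<Longrightarrow> ?O (hd xs) = ?O (last xs) \<or> ?QA (?O (hd xs)) (?O (last xs))"
      proof (induction xs)
        case Nil then show ?case by (simp add: is_walk_def)
      next
        case (Cons a xs)
        show ?case
        proof (cases "xs = []")
          case True then show ?thesis by simp
        next
          case False
          have w: "is_walk E xs" using walk_Cons[OF False, of E a] Cons.prems(1) by blast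
          have e: "E a (hd xs)" using walk_Cons[OF False, of E a] Cons.prems(1) by blast
          have aV: "a \<in> V" and hV: "hd xs \<in> V" using EV[OF e] by auto
          have IH: "?O (hd xs) = ?O (last xs) \<or> ?QA (?O (hd xs)) (?O (last xs))"
            using Cons.IH[OF w hV] .
          have ah: "?QA (?O a) (?O (hd xs))" unfolding quot_adj_def
            using qvI[OF aV] qvI[OF hV] noin[OF e] self[OF aV] self[OF hV] e by blast
          have "?O a = ?O (last xs) \<or> ?QA (?O a) (?O (last xs))"
          proof (cases "?O (hd xs) = ?O (last xs)")
            case True then show ?thesis using ah by simp
          next
            case False
            then have hl: "?QA (?O (hd xs)) (?O (last xs))" using IH by blast
            show ?thesis
            proof (cases "?O a = ?O (last xs)")
              case True then show ?thesis by blast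
            next
              case False then show ?thesis using all2[OF ah hl] by blast
            qed
          qed
          then show ?thesis using False by simp
        qed
      qed
    qed
    show ?thesis unfolding complete_graph_def
    proof (intro ballI impI)
      fix U Y assume U: "U \<in> ?QV" and Y: "Y \<in> ?QV" and XY: "U \<noteq> Y"
      obtain x where x: "x \<in> V" "U = ?O x" using U unfolding quot_vertices_def by blast
      obtain y where y: "y \<in> V" "Y = ?O y" using Y unfolding quot_vertices_def by blast
      obtain xs where xs: "is_walk E xs" "hd xs = x" "last xs = y" using assms(3) x(1) y(1)
        unfolding connected_graph_def by blast
      have "?O x = ?O y \<or> ?QA (?O x) (?O y)" using walkR[OF xs(1)] xs(2,3) x(1) by simp
      then show "?QA U Y" using x y XY by blast
    qed
  qed
  have finQ: "finite ?QV" unfolding quot_vertices_def using assms(1) by simp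
  show ?thesis
  proof
    assume comp: "complete_graph ?QV ?QA"
    obtain T where T: "T \<subseteq> ?QV" "card T = 3" using obtain_subset_with_card_n[OF assms(9)] by metis
    then obtain A B C where ABC: "T = {A,B,C}" "A \<noteq> B" "B \<noteq> C" "A \<noteq> C" using card_3_iff by metis
    have inQ: "A \<in> ?QV" "B \<in> ?QV" "C \<in> ?QV" using T(1) ABC(1) by auto
    have c: "is_cycle ?QA [A,B,C]" unfolding is_cycle_def
      using comp inQ ABC(2-4) unfolding complete_graph_def by (simp add: walk_Cons2 walk_single)
    have le: "girth ?QA \<le> enat (length [A,B,C])" unfolding girth_def
      by (rule Inf_lower) (use c in blast)
    have ge: "enat 3 \<le> girth ?QA" unfolding girth_def
    proof (rule Inf_greatest)
      fix k assume "k \<in> {enat (length xs) |xs. is_cycle ?QA xs}"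
      then show "enat 3 \<le> k" unfolding is_cycle_def by auto
    qed
    show "girth ?QA = 3" using le ge by (simp add: numeral_eq_enat numeral_3_eq_3)
  next
    assume g3: "girth ?QA = 3"
    let ?S = "{enat (length xs) |xs. is_cycle ?QA xs}"
    have ne: "?S \<noteq> {}"
    proof
      assume "?S = {}"
      then have "girth ?QA = \<infinity>" unfolding girth_def by (simp add: Inf_enat_def)
      then show False using g3 by simp
    qed
    have eq: "Inf ?S = (LEAST x. x \<in> ?S)" unfolding Inf_enat_def using ne by (rule if_not_P)
    have ex: "\<exists>x. x \<in> ?S" using ne by blast
    have mem: "(LEAST x. x \<in> ?S) \<in> ?S" using ex by (rule LeastI_ex)
    have im: "Inf ?S \<in> ?S" unfolding eq by (rule mem)
    have i3: "Inf ?S = 3" using g3 unfolding girth_def .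
    have "(3::enat) \<in> ?S" using im unfolding i3 .
    then obtain xs where xs0: "3 = enat (length xs)" "is_cycle ?QA xs" by blast
    then have xs: "is_cycle ?QA xs" "enat (length xs) = 3" by simp_all
    then have l3: "length xs = 3" by (simp add: numeral_eq_enat)
    then obtain A B C where ABC: "xs = [A,B,C]" by (auto simp: length_Suc_conv numeral_3_eq_3)
    have "?QA A B" "?QA B C" "?QA C A" "A \<noteq> C"
      using xs(1) unfolding ABC is_cycle_def by (auto simp: walk_Cons2)
    then show "complete_graph ?QV ?QA" using main by blast
  qed
qed
end
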